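(* Let $k\geq2$ and let $L=(l_1,\dots,l_k)$ be generic and reduced positive integers with sum $n$. Fix $i\in[k]$, let $d=\gcd(n,l_i)$ and $q=n/d$. For $v\in\mathbb{Z}_n$ let ${}_vE_i^q$ be the closed edge-path starting at $v$ and making $q$ consecutive steps of type $i$ (through $v,v+l_i,\dots,v+ql_i=v$). Then all the cycles ${}_vE_i^q$, $v\in\mathbb{Z}_n$, are homologous in $Tonn^{n,k}(L)$.
   Context: $L$ is generic if for all $I,J\subseteq[k]$, $\sum_{i\in I}l_i=\sum_{j\in J}l_j$ implies $I=J$; reduced if $\gcd(l_1,\dots,l_k)=1$. The generalized tonnetz $Tonn^{n,k}(L)$ is the simplicial complex on vertex set $\mathbb{Z}_n$ whose maximal simplices are $\Delta(x;\sigma)=\{x,\,x+l_{\sigma(1)},\dots,x+l_{\sigma(1)}+\dots+l_{\sigma(k-1)}\}$ for $x\in\mathbb{Z}_n$, $\sigma\in S_k$. A step of type $i$ from a vertex $y$ is the oriented 1-simplex from $y$ to $y+l_i$. *)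

theory Defs
  imports "HOL-Combinatorics.Permutations" "HOL-Library.Function_Algebras"
begin

text \<open>The vector L = (l_1,...,l_k) is a list of naturals; indices are 0..<k (k = length L).
  Vertices of the tonnetz are the residues 0..<n, n = sum_list L, representing Z_n.\<close>

definition generic :: "nat list \<Rightarrow> bool" where
  "generic L \<longleftrightarrow> (\<forall>I J. I \<subseteq> {..<length L} \<longrightarrow> J \<subseteq> {..<length L} \<longrightarrow>
      (\<Sum>i\<in>I. L ! i) = (\<Sum>j\<in>J. L ! j) \<longrightarrow> I = J)"

definition reduced :: "nat list \<Rightarrow> bool" where
  "reduced L \<longleftrightarrow> Gcd (set L) = 1"

definition max_simplex :: "nat list \<Rightarrow> nat \<Rightarrow> (nat \<Rightarrow> nat) \<Rightarrow> nat set" where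
  "max_simplex L x \<sigma> =
     {(x + (\<Sum>j<m. L ! (\<sigma> j))) mod sum_list L | m. m < length L}"

definition tonnetz :: "nat list \<Rightarrow> nat set set" where
  "tonnetz L = {S. S \<noteq> {} \<and> (\<exists>x < sum_list L. \<exists>\<sigma>. \<sigma> permutes {..<length L} \<and>
                                    S \<subseteq> max_simplex L x \<sigma>)}"

text \<open>Integer simplicial 1-chains, represented as antisymmetric functions on ordered vertex pairs;
  the elementary chain of the oriented 1-simplex from a to b.\<close>
definition edge :: "nat \<Rightarrow> nat \<Rightarrow> (nat \<Rightarrow> nat \<Rightarrow> int)" where
  "edge a b = (\<lambda>x y. (if x = a \<and> y = b then 1 else 0) - (if x = b \<and> y = a then 1 else 0))"

definition bd2 :: "nat \<Rightarrow> nat \<Rightarrow> nat \<Rightarrow> (nat \<Rightarrow> nat \<Rightarrow> int)" where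
  "bd2 a b c = edge b c - edge a c + edge a b"

definition homologous :: "nat list \<Rightarrow> (nat \<Rightarrow> nat \<Rightarrow> int) \<Rightarrow> (nat \<Rightarrow> nat \<Rightarrow> int) \<Rightarrow> bool" where
  "homologous L c1 c2 \<longleftrightarrow>
     (\<exists>ts :: (int \<times> nat \<times> nat \<times> nat) list.
        (\<forall>(c, a, b, d) \<in> set ts. {a, b, d} \<in> tonnetz L \<and> card {a, b, d} = 3) \<and>
        c1 - c2 = sum_list (map (\<lambda>(c, a, b, d). (\<lambda>x y. c * bd2 a b d x y)) ts))"

definition step_cycle :: "nat \<Rightarrow> nat \<Rightarrow> nat \<Rightarrow> nat \<Rightarrow> (nat \<Rightarrow> nat \<Rightarrow> int)" where
  "step_cycle n l q v = (\<Sum>j<q. edge ((v + j * l) mod n) ((v + (j + 1) * l) mod n))"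

end

theory Submission imports Defs begin

lemma hom_refl: "homologous L c c"
  unfolding homologous_def by (rule exI[of _ "[]"]) simp

lemma hom_sym: assumes "homologous L c1 c2" shows "homologous L c2 c1"
proof -
  from assms obtain ts where ts: "\<forall>(c, a, b, d) \<in> set ts. {a, b, d} \<in> tonnetz L \<and> card {a, b, d} = 3"
    "c1 - c2 = sum_list (map (\<lambda>(c, a, b, d). (\<lambda>x y. c * bd2 a b d x y)) ts)"
    unfolding homologous_def by blast
  define ts' where "ts' = map (\<lambda>(c::int, a::nat, b::nat, d::nat). (-c, a, b, d)) ts"
  have "sum_list (map (\<lambda>(c, a, b, d). (\<lambda>x y. c * bd2 a b d x y)) ts') =
        - sum_list (map (\<lambda>(c, a, b, d). (\<lambda>x y. c * bd2 a b d x y)) ts)"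
    unfolding ts'_def by (induction ts) (auto simp: fun_eq_iff)
  then have "c2 - c1 = sum_list (map (\<lambda>(c, a, b, d). (\<lambda>x y. c * bd2 a b d x y)) ts')"
    using ts(2) by (metis minus_diff_eq)
  with ts(1) show ?thesis unfolding homologous_def
    by (intro exI[of _ ts']) (auto simp: ts'_def)
qed

lemma hom_trans: assumes "homologous L c1 c2" "homologous L c2 c3" shows "homologous L c1 c3"
proof -
  from assms obtain ts where ts: "\<forall>(c, a, b, d) \<in> set ts. {a, b, d} \<in> tonnetz L \<and> card {a, b, d} = 3"
    "c1 - c2 = sum_list (map (\<lambda>(c, a, b, d). (\<lambda>x y. c * bd2 a b d x y)) ts)"
    unfolding homologous_def by blast
  from assms obtain us where us: "\<forall>(c, a, b, d) \<in> set us. {a, b, d} \<in> tonnetz L \<and> card {a, b, d} = 3"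
    "c2 - c3 = sum_list (map (\<lambda>(c, a, b, d). (\<lambda>x y. c * bd2 a b d x y)) us)"
    unfolding homologous_def by blast
  have "c1 - c3 = (c1 - c2) + (c2 - c3)" by simp
  with ts us show ?thesis unfolding homologous_def
    by (intro exI[of _ "ts @ us"]) auto
qed

lemma mod_ne: fixes a d n :: nat assumes "0 < d" "d < n" shows "(a + d) mod n \<noteq> a mod n"
  by (metis assms mod_add_self2 mod_eq_dvd_iff_nat le_add1 add_diff_cancel_left' dvd_imp_le not_le)

lemma step_cycle_mod: "step_cycle n l q (v mod n) = step_cycle n l q v"
  unfolding step_cycle_def by (simp add: mod_add_left_eq)

lemma perm_exists:
  assumes "p < k" "r < k" "p \<noteq> r" "2 \<le> k"
  shows "\<exists>\<sigma>. \<sigma> permutes {..<k} \<and> \<sigma> 0 = p \<and> \<sigma> (Suc 0) = r"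
proof -
  define \<tau> where "\<tau> = Transposition.transpose (0::nat) p"
  define \<sigma> where "\<sigma> = \<tau> \<circ> Transposition.transpose (Suc 0) (\<tau> r)"
  have t: "\<tau> permutes {..<k}" unfolding \<tau>_def using assms by (intro permutes_swap_id) auto
  have tr: "\<tau> r < k" "\<tau> r \<noteq> 0" using assms unfolding \<tau>_def by (auto simp: transpose_def)
  have "Transposition.transpose (Suc 0) (\<tau> r) permutes {..<k}" using tr assms by (intro permutes_swap_id) auto
  then have "\<sigma> permutes {..<k}" unfolding \<sigma>_def using t by (rule permutes_compose)
  moreover have "\<sigma> 0 = p" using tr(2) unfolding \<sigma>_def \<tau>_def by (simp add: transpose_def)
  moreover have "\<sigma> (Suc 0) = r" unfolding \<sigma>_def \<tau>_def by (auto simp: transpose_def)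
  ultimately show ?thesis by blast
qed

lemma tri:
  assumes k3: "length L \<ge> 3" and pos: "\<forall>l\<in>set L. l > 0"
    and p: "p < length L" "r < length L" "p \<noteq> r" and x: "x < sum_list L"
  shows "{x, (x + L!p) mod sum_list L, (x + L!p + L!r) mod sum_list L} \<in> tonnetz L \<and>
         card {x, (x + L!p) mod sum_list L, (x + L!p + L!r) mod sum_list L} = 3"
proof -
  let ?n = "sum_list L"
  obtain \<sigma> where s: "\<sigma> permutes {..<length L}" "\<sigma> 0 = p" "\<sigma> (Suc 0) = r"
    using perm_exists[of p "length L" r] p k3 by auto
  have "{x, (x + L!p) mod ?n, (x + L!p + L!r) mod ?n} \<subseteq> max_simplex L x \<sigma>"
  proof -
    have "x = (x + (\<Sum>j<0. L ! (\<sigma> j))) mod ?n" using x by simp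
    moreover have "(x + L!p) mod ?n = (x + (\<Sum>j<1. L ! (\<sigma> j))) mod ?n" using s by simp
    moreover have "(x + L!p + L!r) mod ?n = (x + (\<Sum>j<2. L ! (\<sigma> j))) mod ?n"
      using s by (simp add: numeral_2_eq_2 add.assoc)
    ultimately show ?thesis unfolding max_simplex_def using k3 by fastforce
  qed
  then have T: "{x, (x + L!p) mod ?n, (x + L!p + L!r) mod ?n} \<in> tonnetz L"
    unfolding tonnetz_def using x s by blast
  obtain t where t: "t < length L" "t \<noteq> p" "t \<noteq> r"
  proof -
    have "\<exists>t\<in>{0,1,2::nat}. t \<noteq> p \<and> t \<noteq> r" by auto
    then obtain t where "t \<in> {0,1,2::nat}" "t \<noteq> p" "t \<noteq> r" by blast
    moreover have "t < length L" using k3 \<open>t \<in> {0,1,2}\<close> by auto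
    ultimately show ?thesis using that by blast
  qed
  have pos': "\<And>j. j < length L \<Longrightarrow> L ! j > 0" using pos nth_mem by blast
  have "L!p + L!r + L!t = sum ((!) L) {p, r, t}" using t p by simp
  also have "\<dots> \<le> sum ((!) L) {..<length L}" using t p by (intro sum_mono2) auto
  also have "\<dots> = ?n" by (simp add: sum_list_sum_nth atLeast0LessThan)
  finally have lt: "L!p + L!r < ?n" using pos'[OF t(1)] by linarith
  have a: "(x + L!p) mod ?n \<noteq> x mod ?n" using lt pos'[OF p(1)] by (intro mod_ne) auto
  have b: "(x + (L!p + L!r)) mod ?n \<noteq> x mod ?n" using lt pos'[OF p(1)] by (intro mod_ne) auto
  have c: "((x + L!p) + L!r) mod ?n \<noteq> (x + L!p) mod ?n" using lt pos'[OF p(2)] by (intro mod_ne) auto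
  have "card {x, (x + L!p) mod ?n, (x + L!p + L!r) mod ?n} = 3"
    using a b c x by (simp add: add.assoc)
  with T show ?thesis by simp
qed

lemma cyc_shift:
  assumes "n dvd q * l"
  shows "step_cycle n l q (v + l) = step_cycle n l q v"
proof -
  define f where "f j = edge ((v + j * l) mod n) ((v + (j + 1) * l) mod n)" for j
  have q: "f q = f 0"
  proof -
    obtain c where c: "q * l = n * c" using assms by (auto simp: dvd_def)
    have "(v + q * l) mod n = v mod n" unfolding c by simp
    moreover have "(v + (q + 1) * l) mod n = (v + l) mod n"
      proof -
        have "v + (q + 1) * l = (v + l) + n * c" using c by (simp add: algebra_simps)
        then show ?thesis by (subst \<open>v + (q + 1) * l = (v + l) + n * c\<close>) simp
      qed
    ultimately show ?thesis unfolding f_def by simp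
  qed
  have "step_cycle n l q (v + l) = (\<Sum>j<q. f (Suc j))"
    unfolding step_cycle_def f_def by (intro sum.cong) (auto simp: algebra_simps)
  also have "\<dots> = (\<Sum>j<Suc q. f j) - f 0" by (simp only: sum.lessThan_Suc_shift) simp
  also have "\<dots> = (\<Sum>j<q. f j)" using q by simp
  also have "\<dots> = step_cycle n l q v" unfolding step_cycle_def f_def by simp
  finally show ?thesis .
qed

lemma cyc_shift_mult:
  assumes "n dvd q * l"
  shows "step_cycle n l q (v + m * l) = step_cycle n l q v"
proof (induction m arbitrary: v)
  case 0 then show ?case by simp
next
  case (Suc m)
  have "v + Suc m * l = (v + l) + m * l" by simp
  then show ?case using Suc[of "v + l"] cyc_shift[OF assms] by (simp add: add.assoc)
qed

lemma scal1: "(\<lambda>x y. (1::int) * f x y) = f" by simp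
lemma scalm1: "(\<lambda>x y. (-1::int) * f x y) = - f" by (simp add: fun_eq_iff)

lemma cyc_hom:
  assumes k3: "length L \<ge> 3" and pos: "\<forall>l\<in>set L. l > 0"
    and ij: "i < length L" "j < length L" "i \<noteq> j"
    and dv: "sum_list L dvd q * L!i"
  shows "homologous L (step_cycle (sum_list L) (L!i) q v) (step_cycle (sum_list L) (L!i) q (v + L!j))"
proof -
  let ?n = "sum_list L" let ?li = "L!i" let ?lj = "L!j"
  have npos: "?n > 0" using pos ij by (metis elem_le_sum_list gr0I le_zero_eq nth_mem)
  define a where "a m = (v + m * ?li) mod ?n" for m
  define b where "b m = (v + ?lj + m * ?li) mod ?n" for m
  define ts where "ts = concat (map (\<lambda>m. [(1::int, a m, a (Suc m), b (Suc m)), (-1, a m, b m, b (Suc m))]) [0..<q])"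
  define F where "F = (\<lambda>(c, a, b, d). (\<lambda>x y. c * bd2 a b d x y))"
  have amod: "(a m + t) mod ?n = (v + m * ?li + t) mod ?n" for m t unfolding a_def by (rule mod_add_left_eq)
  have a1: "a (Suc m) = (a m + ?li) mod ?n" for m unfolding amod unfolding a_def by (simp add: algebra_simps)
  have b1: "b (Suc m) = (a m + ?li + ?lj) mod ?n" for m unfolding add.assoc[of "a m"] amod unfolding b_def by (simp add: algebra_simps)
  have b0: "b m = (a m + ?lj) mod ?n" for m unfolding amod unfolding b_def by (simp add: algebra_simps)
  have b2: "b (Suc m) = (a m + ?lj + ?li) mod ?n" for m unfolding add.assoc[of "a m"] amod unfolding b_def by (simp add: algebra_simps)
  have alt: "a m < ?n" for m unfolding a_def using npos by simp
  have good: "\<forall>(c, x, y, z) \<in> set ts. {x, y, z} \<in> tonnetz L \<and> card {x, y, z} = 3"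
  proof -
    { fix m
      have "{a m, a (Suc m), b (Suc m)} \<in> tonnetz L \<and> card {a m, a (Suc m), b (Suc m)} = 3"
        unfolding a1 b1 using tri[OF k3 pos ij alt] by simp
      moreover have "{a m, b m, b (Suc m)} \<in> tonnetz L \<and> card {a m, b m, b (Suc m)} = 3"
        unfolding b2 b0[of m] using tri[OF k3 pos ij(2,1) _ alt] ij(3) by simp
      ultimately have "\<forall>(c, x, y, z) \<in> set [(1::int, a m, a (Suc m), b (Suc m)), (-1, a m, b m, b (Suc m))].
           {x, y, z} \<in> tonnetz L \<and> card {x, y, z} = 3" by simp }
    then show ?thesis unfolding ts_def by auto
  qed
  define e where "e m = edge (a m) (a (Suc m))" for m
  define h where "h m = edge (b m) (b (Suc m))" for m
  define g where "g m = edge (a m) (b m)" for m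
  have sumts: "sum_list (map F ts) = (\<Sum>m<q. e m - h m + (g (Suc m) - g m))"
  proof -
    have "sum_list (map F ts) = (\<Sum>m<q. bd2 (a m) (a (Suc m)) (b (Suc m)) - bd2 (a m) (b m) (b (Suc m)))"
      unfolding ts_def F_def by (induction q) (simp_all add: scal1 scalm1)
    also have "\<dots> = (\<Sum>m<q. e m - h m + (g (Suc m) - g m))"
      unfolding bd2_def e_def g_def h_def by (intro sum.cong) (simp_all add: algebra_simps)
    finally show ?thesis .
  qed
  obtain c where c: "q * ?li = ?n * c" using dv by (auto simp: dvd_def)
  have aq: "a q = a 0" unfolding a_def c by simp
  have bq: "b q = b 0" unfolding b_def c by (metis mod_mult_self2 mult_0 add_0_right)
  have "(\<Sum>m<q. e m - h m + (g (Suc m) - g m)) = (\<Sum>m<q. e m) - (\<Sum>m<q. h m) + (g q - g 0)"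
    by (simp add: sum.distrib sum_subtractf sum_lessThan_telescope[of g q, symmetric, unfolded sum_subtractf])
  also have "g q - g 0 = 0" unfolding g_def aq bq by simp
  also have "(\<Sum>m<q. e m) = step_cycle ?n ?li q v" unfolding e_def a_def step_cycle_def by simp
  also have "(\<Sum>m<q. h m) = step_cycle ?n ?li q (v + ?lj)" unfolding h_def b_def step_cycle_def by simp
  finally have "step_cycle ?n ?li q v - step_cycle ?n ?li q (v + ?lj) = sum_list (map F ts)"
    using sumts by (metis add_0_right)
  with good show ?thesis unfolding homologous_def F_def by blast
qed

theorem proposition4p3:
  fixes L :: "nat list" and i :: nat
  assumes "length L \<ge> 2"
    and "\<forall>l \<in> set L. l > 0"
    and "generic L"
    and "reduced L"
    and "i < length L"
  shows "\<forall>v < sum_list L. \<forall>w < sum_list L.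
           homologous L
             (step_cycle (sum_list L) (L ! i) (sum_list L div gcd (sum_list L) (L ! i)) v)
             (step_cycle (sum_list L) (L ! i) (sum_list L div gcd (sum_list L) (L ! i)) w)"
proof -
  define n where "n = sum_list L"
  define q where "q = n div gcd n (L!i)"
  define C where "C v = step_cycle n (L!i) q v" for v
  define R where "R v w = homologous L (C v) (C w)" for v w
  have npos: "n > 0" using assms(2,5) unfolding n_def
    using elem_le_sum_list[OF assms(5)] nth_mem[OF assms(5)] by fastforce
  have dv: "n dvd q * L!i"
  proof -
    have "q * L!i = n * L!i div gcd n (L!i)" unfolding q_def
      by (rule dvd_div_mult) simp
    also have "\<dots> = n * (L!i div gcd n (L!i))" by (rule div_mult_swap[symmetric]) simp
    finally have "q * L!i = n * (L!i div gcd n (L!i))" .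
    then show ?thesis by simp
  qed
  have Cmod: "C (v mod n) = C v" for v unfolding C_def by (rule step_cycle_mod)
  have Cn: "C (v + n) = C v" for v using Cmod[of "v+n"] Cmod[of v] by simp
  have Cshift: "C (v + L!i) = C v" for v unfolding C_def by (rule cyc_shift[OF dv])
  have step: "R v (v + L!j)" if j: "j < length L" for v j
  proof (cases "j = i")
    case True then show ?thesis unfolding R_def using Cshift hom_refl by simp
  next
    case False
    show ?thesis
    proof (cases "length L \<ge> 3")
      case True
      then show ?thesis unfolding R_def C_def n_def q_def
        using cyc_hom[OF True assms(2) assms(5) j False[symmetric]] dv unfolding n_def q_def by blast
    next
      case k2: False
      then have "length L = 2" using assms(1) by simp
      then obtain x y where L: "L = [x, y]"
        by (auto simp: numeral_2_eq_2 length_Suc_conv)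
      have "L!i + L!j = n"
      proof -
        have "(i = 0 \<and> j = 1) \<or> (i = 1 \<and> j = 0)" using \<open>length L = 2\<close> j assms(5) False by auto
        then show ?thesis unfolding n_def L by auto
      qed
      then have e: "v + L!j + L!i = v + n" by simp
      have "C (v + L!j) = C (v + L!j + L!i)" using Cshift[of "v + L!j"] by simp
      also have "\<dots> = C v" unfolding e by (rule Cn)
      finally have "C (v + L!j) = C v" .
      then show ?thesis unfolding R_def by (simp add: hom_refl)
    qed
  qed
  define S where "S = {d. \<forall>v. R v (v + d)}"
  have S0: "0 \<in> S" unfolding S_def R_def by (simp add: hom_refl)
  have Sadd: "a + b \<in> S" if "a \<in> S" "b \<in> S" for a b
  proof -
    { fix v
      have "R v (v + a)" "R (v + a) ((v + a) + b)" using that unfolding S_def by blast+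
      then have "R v (v + (a + b))" unfolding R_def add.assoc by (rule hom_trans) }
    then show ?thesis unfolding S_def by blast
  qed
  have Smult: "m * a \<in> S" if "a \<in> S" for a m
    by (induction m) (simp_all add: S0 Sadd that)
  have Smod: "e \<in> S" if "d \<in> S" "d mod n = e mod n" for d e
  proof -
    have "C (v + d) = C (v + e)" for v
    proof -
      have "(v + d) mod n = (v + e) mod n" using that(2) by (metis mod_add_right_eq)
      then show ?thesis using Cmod[of "v+d"] Cmod[of "v+e"] by simp
    qed
    then show ?thesis using that(1) unfolding S_def R_def by simp
  qed
  have Sgcd: "gcd a b \<in> S" if "a \<in> S" "b \<in> S" for a b
  proof (cases "a = 0")
    case True then show ?thesis using that by simp
  next
    case False
    then obtain x y where xy: "a * x = b * y + gcd a b" using bezout_nat by blast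
    have "a * x + b * y * (n - 1) = gcd a b + n * (b * y)" using xy npos
      by (cases n) (simp_all add: algebra_simps)
    then have "(a * x + b * y * (n - 1)) mod n = gcd a b mod n" by simp
    moreover have "a * x + b * y * (n - 1) \<in> S"
    proof -
      have "x * a \<in> S" "(y * (n - 1)) * b \<in> S" using that Smult by blast+
      then show ?thesis using Sadd by (simp add: mult.commute mult.left_commute mult.assoc)
    qed
    ultimately show ?thesis using Smod by blast
  qed
  have SGcd: "set xs \<subseteq> S \<Longrightarrow> Gcd (set xs) \<in> S" for xs
    by (induction xs) (simp_all add: S0 Sgcd)
  have "set L \<subseteq> S"
  proof
    fix l assume "l \<in> set L"
    then obtain j where "j < length L" "l = L!j" by (metis in_set_conv_nth)
    then show "l \<in> S" unfolding S_def using step by blast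
  qed
  then have "1 \<in> S" using SGcd assms(4) unfolding reduced_def by metis
  then have Sall: "d \<in> S" for d using Smult[of 1 d] by simp
  show ?thesis
  proof (intro allI impI)
    fix v w assume "v < sum_list L" "w < sum_list L"
    then have "v + (n - v + w) = w + n" unfolding n_def by simp
    moreover have "R v (v + (n - v + w))" using Sall[of "n - v + w"] unfolding S_def by blast
    ultimately have "R v (w + n)" by (simp add: add.commute)
    then show "homologous L
             (step_cycle (sum_list L) (L ! i) (sum_list L div gcd (sum_list L) (L ! i)) v)
             (step_cycle (sum_list L) (L ! i) (sum_list L div gcd (sum_list L) (L ! i)) w)"
      unfolding R_def Cn unfolding C_def q_def n_def .
  qed
qed

end
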